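(* Let $j,m\ge1$ be integers, let $b:(0,\infty)\times\mathbb R^2\times\mathbb R^2\to\mathbb C$ be $(j,m)$-adapted, and let $\mathcal E\subset[1,2]$ be finite. Then for $F\in L^2(\mathbb R^4)$, $$\|S[F,b]\|_{L^2(\mathbb R^2\times\mathcal E)}\le c\,\|b\|_\infty\,2^{j-\frac m2}(\#\mathcal E)^{1/2}\|F\|_{L^2(\mathbb R^4)},$$ with $c$ an absolute constant.
   Context: For $F:\mathbb R^2\times\mathbb R^2\to\mathbb C$ (with Fourier transform $\widehat F$ on $\mathbb R^4$, $\widehat F(\xi)=\int e^{-i\langle x,\xi\rangle}F(x)dx$), a fixed choice of sign $\pm$, and a symbol $b$, set $S[F,b](\xi,t)=\int_{\mathbb R^2}e^{\pm it(|\xi-\eta|+|\eta|)}b(t,\xi,\eta)\widehat F(\xi-\eta,\eta)\,d\eta$. Let $\Theta_j=\{\omega\in\mathbb R^2:0<\omega_1<2^{-10}\omega_2,\ 2^{j-1}\le|\omega|\le2^{j+1}\}$. $b$ is $(j,m)$-adapted if $b$ is smooth and $b(t,\xi,\eta)=0$ unless $\eta,\xi-\eta\in\Theta_j$ and $\angle(\xi,\eta)\le2^{-m+5}$, where $\angle(\xi,\eta)\in[0,\pi]$ is the angle between $\xi$ and $\eta$. $L^2(\mathbb R^2\times\mathcal E)$ uses Lebesgue measure in $\xi$ times counting measure in $t$; $\|b\|_\infty$ is the supremum of $|b|$. *)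

theory Defs
  imports "HOL-Analysis.Analysis"
begin

inductive_set iter_derivs :: "'a::real_normed_vector set \<Rightarrow> ('a \<Rightarrow> 'b::real_normed_vector) \<Rightarrow> ('a \<Rightarrow> 'b) set"
  for S :: "'a set" and f :: "'a \<Rightarrow> 'b" where
  base: "f \<in> iter_derivs S f"
| step: "g \<in> iter_derivs S f \<Longrightarrow> (\<lambda>x. frechet_derivative g (at x) v) \<in> iter_derivs S f"

definition smooth_on :: "'a::real_normed_vector set \<Rightarrow> ('a \<Rightarrow> 'b::real_normed_vector) \<Rightarrow> bool" where
  "smooth_on S f \<longleftrightarrow> (\<forall>g \<in> iter_derivs S f. \<forall>x\<in>S. g differentiable (at x))"

definition vec_angle :: "real^2 \<Rightarrow> real^2 \<Rightarrow> real" where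
  "vec_angle x y = arccos ((x \<bullet> y) / (norm x * norm y))"

definition Theta :: "nat \<Rightarrow> (real^2) set" where
  "Theta j = {w. 0 < w$1 \<and> w$1 < 2 powr (-10) * w$2 \<and>
                 2 powr (real j - 1) \<le> norm w \<and> norm w \<le> 2 powr (real j + 1)}"

definition adapted :: "nat \<Rightarrow> nat \<Rightarrow> (real \<Rightarrow> real^2 \<Rightarrow> real^2 \<Rightarrow> complex) \<Rightarrow> bool" where
  "adapted j m b \<longleftrightarrow>
     smooth_on ({0<..} \<times> UNIV) (\<lambda>(t::real, \<xi>::real^2, \<eta>::real^2). b t \<xi> \<eta>) \<and>
     (\<forall>t>0. \<forall>\<xi> \<eta>. b t \<xi> \<eta> \<noteq> 0 \<longrightarrow>
        \<eta> \<in> Theta j \<and> \<xi> - \<eta> \<in> Theta j \<and> vec_angle \<xi> \<eta> \<le> 2 powr (5 - real m))"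

definition sup_norm :: "(real \<Rightarrow> real^2 \<Rightarrow> real^2 \<Rightarrow> complex) \<Rightarrow> ennreal" where
  "sup_norm b = (SUP p \<in> {0<..} \<times> (UNIV :: ((real^2) \<times> (real^2)) set).
                   ennreal (cmod (b (fst p) (fst (snd p)) (snd (snd p)))))"

definition L2 :: "('a::euclidean_space \<Rightarrow> complex) set" where
  "L2 = {F. F \<in> borel_measurable lborel \<and> (\<integral>\<^sup>+ x. ennreal ((cmod (F x))\<^sup>2) \<partial>lborel) < \<infinity>}"

text \<open>G is the (Plancherel) L^2 Fourier transform of F, with convention
  hat F(xi) = int e^{-i<x,xi>} F(x) dx, defined as the L^2 limit of the
  Fourier integrals of the truncations of F to balls of radius R.\<close>
definition is_fourier_L2 :: "('a::euclidean_space \<Rightarrow> complex) \<Rightarrow> ('a \<Rightarrow> complex) \<Rightarrow> bool" where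
  "is_fourier_L2 F G \<longleftrightarrow> G \<in> borel_measurable lborel \<and>
     ((\<lambda>R::real. \<integral>\<^sup>+ \<xi>. ennreal ((cmod (G \<xi> -
          (LINT x : cball 0 R | lborel. exp (- \<i> * complex_of_real (x \<bullet> \<xi>)) * F x)))\<^sup>2) \<partial>lborel)
       \<longlongrightarrow> 0) at_top"

text \<open>S[F,b](xi,t), written in terms of G = hat F; s = +1 or -1 is the sign.\<close>
definition S_op :: "real \<Rightarrow> ((real^2) \<times> (real^2) \<Rightarrow> complex) \<Rightarrow> (real \<Rightarrow> real^2 \<Rightarrow> real^2 \<Rightarrow> complex)
                     \<Rightarrow> real^2 \<Rightarrow> real \<Rightarrow> complex" where
  "S_op s G b \<xi> t = (LINT \<eta> | lborel.
      exp (complex_of_real s * \<i> * complex_of_real (t * (norm (\<xi> - \<eta>) + norm \<eta>)))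
      * b t \<xi> \<eta> * G (\<xi> - \<eta>, \<eta>))"

end

theory Submission
  imports Defs "HOL-Probability.Characteristic_Functions"
begin

lemma aux_cancel: "(a::real) \<noteq> 0 \<Longrightarrow> complex_of_real a * (complex_of_real (1/a) * z) = z"
  by (simp add: mult.assoc[symmetric] of_real_mult[symmetric] del: of_real_mult)

lemma gauss_ft_1d:
  fixes \<sigma> s :: real assumes sp: "\<sigma> > 0"
  shows "(\<integral>u. exp (- \<i> * complex_of_real (s * u)) * complex_of_real (exp (- (u/\<sigma>)\<^sup>2/2)) \<partial>lborel)
     = complex_of_real (2*pi * normal_density 0 (1/\<sigma>) s)"
proof -
  define I where "I = (\<integral>x. exp (- \<i> * complex_of_real (s * (\<sigma> * x))) * complex_of_real (exp (- x\<^sup>2/2)) \<partial>lborel)"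
  have c: "char std_normal_distribution (- s * \<sigma>) = complex_of_real (exp (- ((- s*\<sigma>)^2) / 2))"
    by (simp add: char_std_normal_distribution)
  have "char std_normal_distribution (- s * \<sigma>) = (\<integral>x. std_normal_density x *\<^sub>R iexp (- s * \<sigma> * x) \<partial>lborel)"
    unfolding char_def by (subst integral_density) auto
  also have "\<dots> = (\<integral>x. complex_of_real (1 / sqrt (2 * pi)) * (exp (- \<i> * complex_of_real (s * (\<sigma> * x))) * complex_of_real (exp (- x\<^sup>2/2))) \<partial>lborel)"
  proof (rule Bochner_Integration.integral_cong[OF refl])
    fix x
    have e: "exp (- \<i> * complex_of_real (s * (\<sigma> * x))) = iexp (- s * \<sigma> * x)"
      by (simp add: mult_ac)
    show "std_normal_density x *\<^sub>R iexp (- s * \<sigma> * x) = complex_of_real (1 / sqrt (2 * pi)) * (exp (- \<i> * complex_of_real (s * (\<sigma> * x))) * complex_of_real (exp (- x\<^sup>2/2)))"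
      unfolding e by (simp add: std_normal_density_def scaleR_conv_of_real)
  qed
  also have "\<dots> = complex_of_real (1 / sqrt (2 * pi)) * I"
    unfolding I_def by (rule integral_mult_right_zero)
  finally have 0: "complex_of_real (exp (- ((- s*\<sigma>)^2) / 2)) = complex_of_real (1 / sqrt (2 * pi)) * I"
    using c by simp
  have 1: "I = complex_of_real (sqrt (2*pi)) * complex_of_real (exp (- ((- s*\<sigma>)^2) / 2))"
    unfolding 0 by (rule aux_cancel[symmetric]) simp
  have "(\<integral>u. exp (- \<i> * complex_of_real (s * u)) * complex_of_real (exp (- (u/\<sigma>)\<^sup>2/2)) \<partial>lborel)
     = \<bar>\<sigma>\<bar> *\<^sub>R (\<integral>x. exp (- \<i> * complex_of_real (s * (0 + \<sigma> * x))) * complex_of_real (exp (- ((0 + \<sigma> * x)/\<sigma>)\<^sup>2/2)) \<partial>lborel)"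
    using sp by (intro lborel_integral_real_affine) auto
  also have "(\<integral>x. exp (- \<i> * complex_of_real (s * (0 + \<sigma> * x))) * complex_of_real (exp (- ((0 + \<sigma> * x)/\<sigma>)\<^sup>2/2)) \<partial>lborel) = I"
    unfolding I_def using sp by (intro Bochner_Integration.integral_cong) auto
  also have "\<bar>\<sigma>\<bar> *\<^sub>R I = complex_of_real (\<sigma> * sqrt (2*pi) * exp (- ((- s*\<sigma>)^2) / 2))"
    using sp by (simp add: 1 scaleR_conv_of_real)
  also have "\<dots> = complex_of_real (2*pi * normal_density 0 (1/\<sigma>) s)"
  proof -
    have q: "sqrt (2 * pi * (1/\<sigma>)\<^sup>2) = sqrt (2*pi) / \<sigma>"
      using sp by (simp add: real_sqrt_mult real_sqrt_divide)
    have p: "sqrt (2*pi) * sqrt (2*pi) = 2 * pi" by simp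
    have "\<sigma> * sqrt (2*pi) = 2*pi * (1 / sqrt (2 * pi * (1/\<sigma>)\<^sup>2))"
      unfolding q using sp p by (simp add: field_simps)
    moreover have "(s * \<sigma>)\<^sup>2 = s\<^sup>2 / (1 / \<sigma>)\<^sup>2" using sp by (simp add: power_divide power_mult_distrib)
    ultimately show ?thesis unfolding normal_density_def by simp
  qed
  finally show ?thesis .
qed

lemma exp_gauss_prod:
  fixes \<xi> :: "'a::euclidean_space"
  shows "exp (- (\<xi> \<bullet> \<xi>) / (2*\<sigma>\<^sup>2)) = (\<Prod>b\<in>Basis. exp (- ((\<xi> \<bullet> b)/\<sigma>)\<^sup>2/2))"
proof -
  have "(\<xi> \<bullet> \<xi>) / (2*\<sigma>\<^sup>2) = (\<Sum>b\<in>Basis. ((\<xi> \<bullet> b)/\<sigma>)\<^sup>2/2)"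
    by (subst euclidean_inner) (simp add: sum_divide_distrib power_divide power2_eq_square mult_ac)
  then have "- (\<xi> \<bullet> \<xi>) / (2*\<sigma>\<^sup>2) = (\<Sum>b\<in>Basis. - ((\<xi> \<bullet> b)/\<sigma>)\<^sup>2/2)"
    by (simp add: sum_negf)
  then show ?thesis by (simp add: exp_sum)
qed

lemma exp_inner_prod:
  fixes a \<xi> :: "'a::euclidean_space"
  shows "exp (- \<i> * complex_of_real (a \<bullet> \<xi>)) = (\<Prod>b\<in>Basis. exp (- \<i> * complex_of_real ((a \<bullet> b) * (\<xi> \<bullet> b))))"
proof -
  have "- \<i> * complex_of_real (a \<bullet> \<xi>) = (\<Sum>b\<in>Basis. - \<i> * complex_of_real ((a \<bullet> b) * (\<xi> \<bullet> b)))"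
    by (subst euclidean_inner) (simp add: sum_distrib_left)
  then show ?thesis by (simp add: exp_sum)
qed

lemma gauss_ft:
  fixes a :: "'a::euclidean_space" and \<sigma> :: real
  assumes sp: "\<sigma> > 0"
  shows "(\<integral>\<xi>. exp (- \<i> * complex_of_real (a \<bullet> \<xi>)) * complex_of_real (exp (- (\<xi> \<bullet> \<xi>) / (2*\<sigma>\<^sup>2))) \<partial>lborel)
     = complex_of_real (\<Prod>b\<in>Basis. 2*pi * normal_density 0 (1/\<sigma>) (a \<bullet> b))"
proof -
  interpret P: product_sigma_finite "\<lambda>_::'a. lborel::real measure"
    unfolding product_sigma_finite_def by (simp add: sigma_finite_lborel)
  define h where "h b u = exp (- \<i> * complex_of_real ((a \<bullet> b) * u)) * complex_of_real (exp (- (u/\<sigma>)\<^sup>2/2))" for b u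
  have int: "integrable lborel (h b)" for b
  proof -
    have "integrable lborel (\<lambda>u. (\<sigma> * sqrt (2*pi)) * normal_density 0 \<sigma> u)"
      using sp by auto
    then show ?thesis unfolding h_def
    proof (rule Bochner_Integration.integrable_bound)
      show "(\<lambda>u. exp (- \<i> * complex_of_real ((a \<bullet> b) * u)) * complex_of_real (exp (- (u/\<sigma>)\<^sup>2/2))) \<in> borel_measurable lborel"
        by measurable
      show "AE x in lborel. norm (exp (- \<i> * complex_of_real ((a \<bullet> b) * x)) * complex_of_real (exp (- (x/\<sigma>)\<^sup>2/2))) \<le> norm (\<sigma> * sqrt (2*pi) * normal_density 0 \<sigma> x)"
        using sp by (auto simp: normal_density_def norm_mult real_sqrt_mult power_divide field_simps)
    qed
  qed
  have "(\<integral>\<xi>. exp (- \<i> * complex_of_real (a \<bullet> \<xi>)) * complex_of_real (exp (- (\<xi> \<bullet> \<xi>) / (2*\<sigma>\<^sup>2))) \<partial>lborel)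
      = (\<integral>x. (\<lambda>\<xi>. exp (- \<i> * complex_of_real (a \<bullet> \<xi>)) * complex_of_real (exp (- (\<xi> \<bullet> \<xi>) / (2*\<sigma>\<^sup>2)))) (\<Sum>b\<in>Basis. x b *\<^sub>R b) \<partial>(\<Pi>\<^sub>M b\<in>Basis. lborel))"
    by (subst lborel_eq) (subst integral_distr, auto)
  also have "\<dots> = (\<integral>x. (\<Prod>b\<in>Basis. h b (x b)) \<partial>(\<Pi>\<^sub>M b\<in>Basis. lborel))"
  proof (rule Bochner_Integration.integral_cong[OF refl])
    fix x :: "'a \<Rightarrow> real"
    let ?v = "\<Sum>b\<in>Basis. x b *\<^sub>R b"
    have v: "b \<in> Basis \<Longrightarrow> ?v \<bullet> b = x b" for b by (simp add: inner_sum_left_Basis)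
    have v': "b \<in> Basis \<Longrightarrow> b \<bullet> ?v = x b" for b using v[of b] by (simp add: inner_commute)
    show "exp (- \<i> * complex_of_real (a \<bullet> ?v)) * complex_of_real (exp (- (?v \<bullet> ?v) / (2*\<sigma>\<^sup>2))) = (\<Prod>b\<in>Basis. h b (x b))"
      unfolding exp_inner_prod[of a] exp_gauss_prod[of ?v] h_def prod.distrib of_real_prod
      by (intro arg_cong2[where f="(*)"] prod.cong) (auto simp: v v' inner_commute)
  qed
  also have "\<dots> = (\<Prod>b\<in>Basis. integral\<^sup>L lborel (h b))"
    by (rule P.product_integral_prod) (auto intro: int)
  also have "\<dots> = (\<Prod>b\<in>Basis. complex_of_real (2*pi * normal_density 0 (1/\<sigma>) (a \<bullet> b)))"
    unfolding h_def using gauss_ft_1d[OF sp] by simp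
  finally show ?thesis by simp
qed

lemma nn_integral_pair_mult:
  fixes u :: "'a::euclidean_space \<Rightarrow> ennreal" and v :: "'b::euclidean_space \<Rightarrow> ennreal"
  assumes [measurable]: "u \<in> borel_measurable lborel" "v \<in> borel_measurable lborel"
  shows "(\<integral>\<^sup>+p. u (fst p) * v (snd p) \<partial>(lborel \<Otimes>\<^sub>M lborel)) = (\<integral>\<^sup>+x. u x \<partial>lborel) * (\<integral>\<^sup>+y. v y \<partial>lborel)"
proof -
  have "(\<integral>\<^sup>+p. u (fst p) * v (snd p) \<partial>(lborel \<Otimes>\<^sub>M lborel)) = (\<integral>\<^sup>+x. \<integral>\<^sup>+y. u x * v y \<partial>lborel \<partial>lborel)"
    using lborel.nn_integral_fst[of "\<lambda>p. u (fst p) * v (snd p)" lborel] by simp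
  also have "\<dots> = (\<integral>\<^sup>+x. u x * (\<integral>\<^sup>+y. v y \<partial>lborel) \<partial>lborel)"
    by (simp add: nn_integral_cmult)
  also have "\<dots> = (\<integral>\<^sup>+x. u x \<partial>lborel) * (\<integral>\<^sup>+y. v y \<partial>lborel)"
    by (simp add: nn_integral_multc)
  finally show ?thesis .
qed

lemma integrable_pair_bound:
  fixes h :: "'a::euclidean_space \<times> 'b::euclidean_space \<Rightarrow> 'c::{banach,second_countable_topology}"
  assumes hm: "h \<in> borel_measurable (lborel \<Otimes>\<^sub>M lborel)"
    and iu: "integrable lborel u" and iv: "integrable lborel v"
    and u0: "\<And>x. u x \<ge> 0" and v0: "\<And>y. v y \<ge> 0"
    and hb: "\<And>x y. norm (h (x,y)) \<le> u x * v y"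
  shows "integrable (lborel \<Otimes>\<^sub>M lborel) h"
proof -
  have [measurable]: "u \<in> borel_measurable lborel" "v \<in> borel_measurable lborel"
    using iu iv by auto
  have fu: "(\<integral>\<^sup>+x. ennreal (u x) \<partial>lborel) < \<infinity>" using iu u0 by (auto simp: integrable_iff_bounded)
  have fv: "(\<integral>\<^sup>+x. ennreal (v x) \<partial>lborel) < \<infinity>" using iv v0 by (auto simp: integrable_iff_bounded)
  have "(\<integral>\<^sup>+p. ennreal (norm (h p)) \<partial>(lborel \<Otimes>\<^sub>M lborel)) \<le> (\<integral>\<^sup>+p. ennreal (u (fst p)) * ennreal (v (snd p)) \<partial>(lborel \<Otimes>\<^sub>M lborel))"
    by (intro nn_integral_mono) (auto simp: ennreal_mult'[symmetric] u0 v0 hb split: prod.splits)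
  also have "\<dots> = (\<integral>\<^sup>+x. ennreal (u x) \<partial>lborel) * (\<integral>\<^sup>+y. ennreal (v y) \<partial>lborel)"
    by (rule nn_integral_pair_mult) auto
  also have "\<dots> < \<infinity>" using fu fv by (simp add: ennreal_mult_less_top)
  finally show ?thesis using hm by (auto simp: integrable_iff_bounded)
qed

definition ft :: "('a::euclidean_space \<Rightarrow> complex) \<Rightarrow> 'a \<Rightarrow> complex" where
  "ft f \<xi> = (\<integral>x. exp (- \<i> * complex_of_real (x \<bullet> \<xi>)) * f x \<partial>lborel)"

definition gk :: "real \<Rightarrow> 'a::euclidean_space \<Rightarrow> real" where
  "gk \<sigma> a = (\<Prod>b\<in>Basis. 2*pi * normal_density 0 (1/\<sigma>) (a \<bullet> b))"

definition gw :: "real \<Rightarrow> 'a::euclidean_space \<Rightarrow> real" where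
  "gw \<sigma> \<xi> = exp (- (\<xi> \<bullet> \<xi>) / (2*\<sigma>\<^sup>2))"

lemma borel_measurable_cnj [measurable]:
  "f \<in> borel_measurable M \<Longrightarrow> (\<lambda>x. cnj (f x)) \<in> borel_measurable M"
  by (rule borel_measurable_continuous_on[where f=cnj]) (auto intro: continuous_intros)

lemma norm_exp_i [simp]: "norm (exp (- \<i> * complex_of_real r)) = 1"
  by (simp add: norm_exp_eq_Re)

lemma gk_nonneg: "gk \<sigma> a \<ge> 0"
  unfolding gk_def by (intro prod_nonneg) auto

lemma gk_even: "gk \<sigma> (- a) = gk \<sigma> a"
  unfolding gk_def normal_density_def by (simp add: inner_minus_left)

lemma gk_measurable [measurable]: "gk \<sigma> \<in> borel_measurable borel"
  unfolding gk_def normal_density_def by measurable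

lemma gw_measurable [measurable]: "gw \<sigma> \<in> borel_measurable borel"
  unfolding gw_def by measurable

lemma nn_integral_gk: "\<sigma> > 0 \<Longrightarrow> (\<integral>\<^sup>+a. ennreal (gk \<sigma> (a::'a::euclidean_space)) \<partial>lborel) = ennreal ((2*pi)^DIM('a))"
proof -
  assume sp: "\<sigma> > 0"
  have nd: "(\<integral>\<^sup>+u. ennreal (2*pi * normal_density 0 (1/\<sigma>) u) \<partial>lborel) = ennreal (2*pi)"
  proof -
    have "(\<integral>\<^sup>+u. ennreal (2*pi * normal_density 0 (1/\<sigma>) u) \<partial>lborel) = ennreal (\<integral>u. 2*pi * normal_density 0 (1/\<sigma>) u \<partial>lborel)"
      using sp by (intro nn_integral_eq_integral) auto
    also have "\<dots> = ennreal (2*pi)" using sp by simp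
    finally show ?thesis .
  qed
  have "(\<integral>\<^sup>+a. ennreal (gk \<sigma> (a::'a)) \<partial>lborel) = (\<integral>\<^sup>+(a::'a). (\<Prod>b\<in>Basis. ennreal (2*pi * normal_density 0 (1/\<sigma>) (a \<bullet> b))) \<partial>lborel)"
    unfolding gk_def by (intro nn_integral_cong) (simp add: prod_ennreal)
  also have "\<dots> = (\<Prod>b\<in>(Basis::'a set). (\<integral>\<^sup>+u. ennreal (2*pi * normal_density 0 (1/\<sigma>) u) \<partial>lborel))"
    by (rule nn_integral_lborel_prod) auto
  also have "\<dots> = ennreal ((2*pi)^DIM('a))"
    unfolding nd by (simp add: prod_ennreal ennreal_power)
  finally show ?thesis .
qed

lemma exp_gauss_1d: "\<sigma> > 0 \<Longrightarrow> exp (- (u/\<sigma>)\<^sup>2/2) = \<sigma> * sqrt (2*pi) * normal_density 0 \<sigma> u"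
  by (simp add: normal_density_def real_sqrt_mult power_divide field_simps)

lemma integrable_gw: "\<sigma> > 0 \<Longrightarrow> integrable lborel (gw \<sigma> :: 'a::euclidean_space \<Rightarrow> real)"
proof -
  assume sp: "\<sigma> > 0"
  have nd: "(\<integral>\<^sup>+u. ennreal (exp (- (u/\<sigma>)\<^sup>2/2)) \<partial>lborel) = ennreal (\<sigma> * sqrt (2*pi))"
  proof -
    have "(\<integral>\<^sup>+u. ennreal (exp (- (u/\<sigma>)\<^sup>2/2)) \<partial>lborel) = ennreal (\<integral>u. \<sigma> * sqrt (2*pi) * normal_density 0 \<sigma> u \<partial>lborel)"
      unfolding exp_gauss_1d[OF sp] using sp by (intro nn_integral_eq_integral) auto
    also have "\<dots> = ennreal (\<sigma> * sqrt (2*pi))" using sp by simp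
    finally show ?thesis .
  qed
  have "(\<integral>\<^sup>+a. ennreal (gw \<sigma> (a::'a)) \<partial>lborel) = (\<integral>\<^sup>+(a::'a). (\<Prod>b\<in>Basis. ennreal (exp (- ((a \<bullet> b)/\<sigma>)\<^sup>2/2))) \<partial>lborel)"
    unfolding gw_def exp_gauss_prod by (intro nn_integral_cong) (simp add: prod_ennreal)
  also have "\<dots> = (\<Prod>b\<in>(Basis::'a set). (\<integral>\<^sup>+u. ennreal (exp (- (u/\<sigma>)\<^sup>2/2)) \<partial>lborel))"
    by (rule nn_integral_lborel_prod) auto
  also have "\<dots> < \<infinity>"
    unfolding nd using sp by (simp add: prod_ennreal ennreal_power)
  finally show ?thesis
    by (auto simp: integrable_iff_bounded gw_def)
qed

lemma gw_nonneg: "gw \<sigma> \<xi> \<ge> 0" unfolding gw_def by simp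

lemma nn_integral_translate:
  fixes h :: "'a::euclidean_space \<Rightarrow> ennreal"
  assumes [measurable]: "h \<in> borel_measurable borel"
  shows "(\<integral>\<^sup>+y. h (c + y) \<partial>lborel) = (\<integral>\<^sup>+y. h y \<partial>lborel)"
proof -
  have "(\<integral>\<^sup>+y. h y \<partial>lborel) = (\<integral>\<^sup>+y. h y \<partial>distr lborel borel ((+) c))"
    by (simp add: lborel_distr_plus)
  also have "\<dots> = (\<integral>\<^sup>+y. h (c + y) \<partial>lborel)"
    by (subst nn_integral_distr) auto
  finally show ?thesis ..
qed

lemma nn_integral_gk_shift1:
  assumes sp: "\<sigma> > 0"
  shows "(\<integral>\<^sup>+y. ennreal (gk \<sigma> ((x::'a::euclidean_space) - y)) \<partial>lborel) = ennreal ((2*pi)^DIM('a))"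
proof -
  have "(\<integral>\<^sup>+y. ennreal (gk \<sigma> (x - y)) \<partial>lborel) = (\<integral>\<^sup>+y. ennreal (gk \<sigma> (- x + y)) \<partial>lborel)"
    by (intro nn_integral_cong) (metis gk_even minus_diff_eq uminus_add_conv_diff)
  also have "\<dots> = (\<integral>\<^sup>+y. ennreal (gk \<sigma> (y::'a)) \<partial>lborel)"
    using nn_integral_translate[of "\<lambda>y. ennreal (gk \<sigma> y)" "- x"] by simp
  also have "\<dots> = ennreal ((2*pi)^DIM('a))" by (rule nn_integral_gk[OF sp])
  finally show ?thesis .
qed

lemma nn_integral_gk_shift2:
  assumes sp: "\<sigma> > 0"
  shows "(\<integral>\<^sup>+x. ennreal (gk \<sigma> (x - (y::'a::euclidean_space))) \<partial>lborel) = ennreal ((2*pi)^DIM('a))"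
proof -
  have "(\<integral>\<^sup>+x. ennreal (gk \<sigma> (x - y)) \<partial>lborel) = (\<integral>\<^sup>+x. ennreal (gk \<sigma> (- y + x)) \<partial>lborel)"
    by (intro nn_integral_cong) simp
  also have "\<dots> = (\<integral>\<^sup>+x. ennreal (gk \<sigma> (x::'a)) \<partial>lborel)"
    using nn_integral_translate[of "\<lambda>y. ennreal (gk \<sigma> y)" "- y"] by simp
  also have "\<dots> = ennreal ((2*pi)^DIM('a))" by (rule nn_integral_gk[OF sp])
  finally show ?thesis .
qed

context
  fixes f :: "'a::euclidean_space \<Rightarrow> complex"
  assumes fm[measurable]: "f \<in> borel_measurable lborel" and fi: "integrable lborel f"
begin

lemma integrable_ef: "integrable lborel (\<lambda>x. exp (- \<i> * complex_of_real (x \<bullet> \<xi>)) * f x)"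
  by (rule Bochner_Integration.integrable_bound[OF integrable_norm[OF fi]]) (auto simp: norm_mult)

lemma ft_sq:
  "complex_of_real ((cmod (ft f \<xi>))\<^sup>2) =
     (\<integral>p. f (fst p) * cnj (f (snd p)) * exp (- \<i> * complex_of_real ((fst p - snd p) \<bullet> \<xi>)) \<partial>lborel)"
proof -
  let ?e = "\<lambda>x. exp (- \<i> * complex_of_real (x \<bullet> \<xi>))"
  have int2: "integrable (lborel \<Otimes>\<^sub>M lborel) (\<lambda>(x,y). ?e x * f x * cnj (?e y * f y))"
    by (rule integrable_pair_bound[where u="\<lambda>x. norm (f x)" and v="\<lambda>x. norm (f x)"])
       (auto simp: fi norm_mult)
  have "complex_of_real ((cmod (ft f \<xi>))\<^sup>2) = ft f \<xi> * cnj (ft f \<xi>)"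
    by (rule complex_norm_square)
  also have "\<dots> = ft f \<xi> * (\<integral>y. cnj (?e y * f y) \<partial>lborel)"
  proof -
    have "(\<integral>y. cnj (?e y * f y) \<partial>lborel) = cnj (ft f \<xi>)" unfolding ft_def by (rule Bochner_Integration.integral_cnj)
    then show ?thesis by simp
  qed
  also have "\<dots> = (\<integral>y. ft f \<xi> * cnj (?e y * f y) \<partial>lborel)"
    by (rule integral_mult_right_zero[symmetric])
  also have "\<dots> = (\<integral>y. (\<integral>x. ?e x * f x * cnj (?e y * f y) \<partial>lborel) \<partial>lborel)"
    unfolding ft_def by (simp add: integral_mult_left_zero)
  also have "\<dots> = integral\<^sup>L (lborel \<Otimes>\<^sub>M lborel) (\<lambda>(x,y). ?e x * f x * cnj (?e y * f y))"
    by (rule lborel_pair.integral_snd) (use int2 in simp)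
  also have "\<dots> = (\<integral>p. (\<lambda>(x,y). ?e x * f x * cnj (?e y * f y)) p \<partial>lborel)"
    by (simp add: lborel_prod)
  also have "\<dots> = (\<integral>p. f (fst p) * cnj (f (snd p)) * exp (- \<i> * complex_of_real ((fst p - snd p) \<bullet> \<xi>)) \<partial>lborel)"
  proof (rule Bochner_Integration.integral_cong[OF refl])
    fix p :: "'a \<times> 'a"
    obtain x y where p: "p = (x,y)" by (cases p)
    have "cnj (?e y) = exp (\<i> * complex_of_real (y \<bullet> \<xi>))" by (simp add: exp_cnj)
    moreover have "?e x * exp (\<i> * complex_of_real (y \<bullet> \<xi>)) = exp (- \<i> * complex_of_real ((x - y) \<bullet> \<xi>))"
      by (simp add: exp_add[symmetric] inner_diff_left algebra_simps)
    ultimately show "(\<lambda>(x,y). ?e x * f x * cnj (?e y * f y)) p = f (fst p) * cnj (f (snd p)) * exp (- \<i> * complex_of_real ((fst p - snd p) \<bullet> \<xi>))"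
      unfolding p by (simp add: mult_ac)
  qed
  finally show ?thesis .
qed

lemma ft_measurable [measurable]: "ft f \<in> borel_measurable lborel"
  unfolding ft_def by measurable

lemma ft_bound: "cmod (ft f \<xi>) \<le> (\<integral>x. norm (f x) \<partial>lborel)"
proof -
  have "cmod (ft f \<xi>) \<le> (\<integral>x. norm (exp (- \<i> * complex_of_real (x \<bullet> \<xi>)) * f x) \<partial>lborel)"
    unfolding ft_def by (rule integral_norm_bound)
  also have "\<dots> = (\<integral>x. norm (f x) \<partial>lborel)" by (simp add: norm_mult)
  finally show ?thesis .
qed

lemma integrable_ff: "integrable lborel (\<lambda>p::'a\<times>'a. norm (f (fst p)) * norm (f (snd p)))"
proof -
  have "integrable (lborel \<Otimes>\<^sub>M lborel) (\<lambda>p::'a\<times>'a. norm (f (fst p)) * norm (f (snd p)))"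
    by (rule integrable_pair_bound[where u="\<lambda>x. norm (f x)" and v="\<lambda>x. norm (f x)"]) (auto simp: fi)
  then show ?thesis by (simp add: lborel_prod)
qed

lemma gauss_fubini:
  assumes sp: "\<sigma> > 0"
  shows "integrable lborel (\<lambda>p::'a\<times>'a. f (fst p) * cnj (f (snd p)) * complex_of_real (gk \<sigma> (fst p - snd p)))"
    and "(\<integral>\<xi>. complex_of_real (gw \<sigma> \<xi>) * complex_of_real ((cmod (ft f \<xi>))\<^sup>2) \<partial>lborel)
       = (\<integral>(p::'a\<times>'a). f (fst p) * cnj (f (snd p)) * complex_of_real (gk \<sigma> (fst p - snd p)) \<partial>lborel)"
proof -
  define \<Phi> where "\<Phi> p \<xi> = complex_of_real (gw \<sigma> \<xi>) * (f (fst p) * cnj (f (snd p)) * exp (- \<i> * complex_of_real ((fst p - snd p) \<bullet> \<xi>)))" for p :: "'a \<times> 'a" and \<xi> :: 'a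
  have mP: "case_prod \<Phi> \<in> borel_measurable (lborel \<Otimes>\<^sub>M lborel)"
    unfolding \<Phi>_def split_beta' lborel_prod[symmetric] by measurable
  have intP: "integrable (lborel \<Otimes>\<^sub>M lborel) (case_prod \<Phi>)"
    by (rule integrable_pair_bound[where u="\<lambda>p::'a\<times>'a. norm (f (fst p)) * norm (f (snd p))" and v="gw \<sigma>"])
       (auto simp: mP \<Phi>_def integrable_ff integrable_gw[OF sp] gw_nonneg norm_mult mult_ac)
  have inner: "(\<integral>\<xi>. \<Phi> p \<xi> \<partial>lborel) = f (fst p) * cnj (f (snd p)) * complex_of_real (gk \<sigma> (fst p - snd p))" for p
  proof -
    have "(\<integral>\<xi>. \<Phi> p \<xi> \<partial>lborel) = (\<integral>\<xi>. f (fst p) * cnj (f (snd p)) * (exp (- \<i> * complex_of_real ((fst p - snd p) \<bullet> \<xi>)) * complex_of_real (gw \<sigma> \<xi>)) \<partial>lborel)"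
      unfolding \<Phi>_def by (simp add: mult_ac)
    also have "\<dots> = f (fst p) * cnj (f (snd p)) * (\<integral>\<xi>. exp (- \<i> * complex_of_real ((fst p - snd p) \<bullet> \<xi>)) * complex_of_real (gw \<sigma> \<xi>) \<partial>lborel)"
      by (rule integral_mult_right_zero)
    also have "(\<integral>\<xi>. exp (- \<i> * complex_of_real ((fst p - snd p) \<bullet> \<xi>)) * complex_of_real (gw \<sigma> \<xi>) \<partial>lborel) = complex_of_real (gk \<sigma> (fst p - snd p))"
      unfolding gw_def gk_def by (rule gauss_ft[OF sp])
    finally show ?thesis .
  qed
  show "integrable lborel (\<lambda>p::'a\<times>'a. f (fst p) * cnj (f (snd p)) * complex_of_real (gk \<sigma> (fst p - snd p)))"
    using lborel_pair.integrable_fst[OF intP] unfolding inner .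
  have "(\<integral>\<xi>. complex_of_real (gw \<sigma> \<xi>) * complex_of_real ((cmod (ft f \<xi>))\<^sup>2) \<partial>lborel)
      = (\<integral>\<xi>. (\<integral>p. \<Phi> p \<xi> \<partial>lborel) \<partial>lborel)"
    unfolding ft_sq \<Phi>_def by (simp add: integral_mult_right_zero)
  also have "\<dots> = (\<integral>p. (\<integral>\<xi>. \<Phi> p \<xi> \<partial>lborel) \<partial>lborel)"
    by (rule lborel_pair.Fubini_integral[OF intP])
  also have "\<dots> = (\<integral>(p::'a\<times>'a). f (fst p) * cnj (f (snd p)) * complex_of_real (gk \<sigma> (fst p - snd p)) \<partial>lborel)"
    unfolding inner ..
  finally show "(\<integral>\<xi>. complex_of_real (gw \<sigma> \<xi>) * complex_of_real ((cmod (ft f \<xi>))\<^sup>2) \<partial>lborel)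
       = (\<integral>(p::'a\<times>'a). f (fst p) * cnj (f (snd p)) * complex_of_real (gk \<sigma> (fst p - snd p)) \<partial>lborel)" .
qed

lemma gauss_bound:
  assumes sp: "\<sigma> > 0"
  shows "(\<integral>\<^sup>+\<xi>. ennreal (gw \<sigma> \<xi> * (cmod (ft f \<xi>))\<^sup>2) \<partial>lborel)
           \<le> ennreal (2 * (2*pi)^DIM('a)) * (\<integral>\<^sup>+x. ennreal ((cmod (f x))\<^sup>2) \<partial>lborel)"
proof -
  let ?g = "\<lambda>\<xi>. gw \<sigma> \<xi> * (cmod (ft f \<xi>))\<^sup>2"
  let ?H = "\<lambda>p::'a\<times>'a. f (fst p) * cnj (f (snd p)) * complex_of_real (gk \<sigma> (fst p - snd p))"
  define L where "L = (\<integral>x. norm (f x) \<partial>lborel)"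
  have ig: "integrable lborel ?g"
  proof (rule Bochner_Integration.integrable_bound)
    show "integrable lborel (\<lambda>\<xi>. gw \<sigma> \<xi> * L\<^sup>2)"
      using integrable_gw[OF sp] by (rule integrable_mult_left)
    show "?g \<in> borel_measurable lborel" by measurable
    show "AE \<xi> in lborel. norm (?g \<xi>) \<le> norm (gw \<sigma> \<xi> * L\<^sup>2)"
    proof (intro AE_I2)
      fix \<xi>
      have "(cmod (ft f \<xi>))\<^sup>2 \<le> L\<^sup>2"
        using ft_bound[of \<xi>] unfolding L_def by (intro power_mono) auto
      then show "norm (?g \<xi>) \<le> norm (gw \<sigma> \<xi> * L\<^sup>2)"
        using gw_nonneg[of \<sigma> \<xi>] by (simp add: abs_mult mult_left_mono)
    qed
  qed
  have "(\<integral>\<^sup>+\<xi>. ennreal (?g \<xi>) \<partial>lborel) = ennreal (\<integral>\<xi>. ?g \<xi> \<partial>lborel)"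
    using ig by (intro nn_integral_eq_integral) (auto simp: gw_nonneg)
  also have "(\<integral>\<xi>. ?g \<xi> \<partial>lborel) = cmod (integral\<^sup>L lborel ?H)"
  proof -
    have "complex_of_real (\<integral>\<xi>. ?g \<xi> \<partial>lborel) = (\<integral>\<xi>. complex_of_real (gw \<sigma> \<xi>) * complex_of_real ((cmod (ft f \<xi>))\<^sup>2) \<partial>lborel)"
      by (subst integral_complex_of_real[symmetric]) simp
    also have "\<dots> = integral\<^sup>L lborel ?H" by (rule gauss_fubini(2)[OF sp])
    finally have "complex_of_real (\<integral>\<xi>. ?g \<xi> \<partial>lborel) = integral\<^sup>L lborel ?H" .
    moreover have "(\<integral>\<xi>. ?g \<xi> \<partial>lborel) \<ge> 0" by (intro integral_nonneg_AE) (auto simp: gw_nonneg)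
    ultimately show ?thesis by (metis abs_of_nonneg norm_of_real)
  qed
  also have "ennreal (cmod (integral\<^sup>L lborel ?H)) \<le> (\<integral>\<^sup>+p. ennreal (cmod (?H p)) \<partial>lborel)"
    by (rule integral_norm_bound_ennreal[OF gauss_fubini(1)[OF sp]])
  also have "\<dots> \<le> (\<integral>\<^sup>+(p::'a\<times>'a). ennreal ((cmod (f (fst p)))\<^sup>2 * gk \<sigma> (fst p - snd p)) + ennreal ((cmod (f (snd p)))\<^sup>2 * gk \<sigma> (fst p - snd p)) \<partial>lborel)"
  proof (intro nn_integral_mono)
    fix p :: "'a \<times> 'a"
    let ?a = "cmod (f (fst p))" and ?b = "cmod (f (snd p))" and ?k = "gk \<sigma> (fst p - snd p)"
    have k0: "?k \<ge> 0" by (rule gk_nonneg)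
    have ab: "?a * ?b \<le> ?a\<^sup>2 + ?b\<^sup>2"
    proof -
      have "0 \<le> (?a - ?b)\<^sup>2" by simp
      moreover have "(?a - ?b)\<^sup>2 = ?a\<^sup>2 - 2 * ?a * ?b + ?b\<^sup>2" by (simp add: power2_diff)
      moreover have "0 \<le> ?a * ?b" by simp
      ultimately show ?thesis by linarith
    qed
    have "cmod (?H p) = ?a * ?b * ?k" using k0 by (simp add: norm_mult)
    also have "\<dots> \<le> (?a\<^sup>2 + ?b\<^sup>2) * ?k" using ab k0 by (rule mult_right_mono)
    finally show "ennreal (cmod (?H p)) \<le> ennreal (?a\<^sup>2 * ?k) + ennreal (?b\<^sup>2 * ?k)"
      using k0 by (subst ennreal_plus[symmetric]) (auto intro!: ennreal_leI simp: distrib_right[symmetric])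
  qed
  also have "\<dots> = (\<integral>\<^sup>+(p::'a\<times>'a). ennreal ((cmod (f (fst p)))\<^sup>2 * gk \<sigma> (fst p - snd p)) \<partial>lborel)
                 + (\<integral>\<^sup>+(p::'a\<times>'a). ennreal ((cmod (f (snd p)))\<^sup>2 * gk \<sigma> (fst p - snd p)) \<partial>lborel)"
  proof (rule nn_integral_add)
    show "(\<lambda>p::'a\<times>'a. ennreal ((cmod (f (fst p)))\<^sup>2 * gk \<sigma> (fst p - snd p))) \<in> borel_measurable lborel"
      unfolding lborel_prod[symmetric] by measurable
    show "(\<lambda>p::'a\<times>'a. ennreal ((cmod (f (snd p)))\<^sup>2 * gk \<sigma> (fst p - snd p))) \<in> borel_measurable lborel"
      unfolding lborel_prod[symmetric] by measurable
  qed
  also have "(\<integral>\<^sup>+(p::'a\<times>'a). ennreal ((cmod (f (fst p)))\<^sup>2 * gk \<sigma> (fst p - snd p)) \<partial>lborel)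
       = ennreal ((2*pi)^DIM('a)) * (\<integral>\<^sup>+x. ennreal ((cmod (f x))\<^sup>2) \<partial>lborel)"
  proof -
    have m: "(\<lambda>p::'a\<times>'a. ennreal ((cmod (f (fst p)))\<^sup>2) * ennreal (gk \<sigma> (fst p - snd p))) \<in> borel_measurable (lborel \<Otimes>\<^sub>M lborel)"
      by measurable
    have "(\<integral>\<^sup>+(p::'a\<times>'a). ennreal ((cmod (f (fst p)))\<^sup>2 * gk \<sigma> (fst p - snd p)) \<partial>lborel)
        = (\<integral>\<^sup>+p. ennreal ((cmod (f (fst p)))\<^sup>2) * ennreal (gk \<sigma> (fst p - snd p)) \<partial>(lborel \<Otimes>\<^sub>M lborel))"
      unfolding lborel_prod by (intro nn_integral_cong) (simp add: ennreal_mult gk_nonneg)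
    also have "\<dots> = (\<integral>\<^sup>+x. \<integral>\<^sup>+y. ennreal ((cmod (f x))\<^sup>2) * ennreal (gk \<sigma> (x - y)) \<partial>lborel \<partial>lborel)"
      using lborel.nn_integral_fst[OF m] by simp
    also have "\<dots> = (\<integral>\<^sup>+x. ennreal ((cmod (f x))\<^sup>2) * ennreal ((2*pi)^DIM('a)) \<partial>lborel)"
    proof (intro nn_integral_cong)
      fix x :: 'a
      have "(\<integral>\<^sup>+y. ennreal ((cmod (f x))\<^sup>2) * ennreal (gk \<sigma> (x - y)) \<partial>lborel) = ennreal ((cmod (f x))\<^sup>2) * (\<integral>\<^sup>+y. ennreal (gk \<sigma> (x - y)) \<partial>lborel)"
        by (rule nn_integral_cmult) measurable
      then show "(\<integral>\<^sup>+y. ennreal ((cmod (f x))\<^sup>2) * ennreal (gk \<sigma> (x - y)) \<partial>lborel) = ennreal ((cmod (f x))\<^sup>2) * ennreal ((2*pi)^DIM('a))"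
        unfolding nn_integral_gk_shift1[OF sp] .
    qed
    also have "\<dots> = (\<integral>\<^sup>+x. ennreal ((cmod (f x))\<^sup>2) \<partial>lborel) * ennreal ((2*pi)^DIM('a))"
      by (rule nn_integral_multc) measurable
    finally show ?thesis by (simp add: mult.commute)
  qed
  also have "(\<integral>\<^sup>+(p::'a\<times>'a). ennreal ((cmod (f (snd p)))\<^sup>2 * gk \<sigma> (fst p - snd p)) \<partial>lborel)
       = ennreal ((2*pi)^DIM('a)) * (\<integral>\<^sup>+x. ennreal ((cmod (f x))\<^sup>2) \<partial>lborel)"
  proof -
    have m: "(\<lambda>p::'a\<times>'a. ennreal ((cmod (f (snd p)))\<^sup>2) * ennreal (gk \<sigma> (fst p - snd p))) \<in> borel_measurable (lborel \<Otimes>\<^sub>M lborel)"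
      by measurable
    have "(\<integral>\<^sup>+(p::'a\<times>'a). ennreal ((cmod (f (snd p)))\<^sup>2 * gk \<sigma> (fst p - snd p)) \<partial>lborel)
        = (\<integral>\<^sup>+p. ennreal ((cmod (f (snd p)))\<^sup>2) * ennreal (gk \<sigma> (fst p - snd p)) \<partial>(lborel \<Otimes>\<^sub>M lborel))"
      unfolding lborel_prod by (intro nn_integral_cong) (simp add: ennreal_mult gk_nonneg)
    also have "\<dots> = (\<integral>\<^sup>+y. \<integral>\<^sup>+x. ennreal ((cmod (f y))\<^sup>2) * ennreal (gk \<sigma> (x - y)) \<partial>lborel \<partial>lborel)"
      using lborel_pair.nn_integral_snd[OF m] by simp
    also have "\<dots> = (\<integral>\<^sup>+y. ennreal ((cmod (f y))\<^sup>2) * ennreal ((2*pi)^DIM('a)) \<partial>lborel)"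
    proof (intro nn_integral_cong)
      fix y :: 'a
      have "(\<integral>\<^sup>+x. ennreal ((cmod (f y))\<^sup>2) * ennreal (gk \<sigma> (x - y)) \<partial>lborel) = ennreal ((cmod (f y))\<^sup>2) * (\<integral>\<^sup>+x. ennreal (gk \<sigma> (x - y)) \<partial>lborel)"
        by (rule nn_integral_cmult) measurable
      then show "(\<integral>\<^sup>+x. ennreal ((cmod (f y))\<^sup>2) * ennreal (gk \<sigma> (x - y)) \<partial>lborel) = ennreal ((cmod (f y))\<^sup>2) * ennreal ((2*pi)^DIM('a))"
        unfolding nn_integral_gk_shift2[OF sp] .
    qed
    also have "\<dots> = (\<integral>\<^sup>+x. ennreal ((cmod (f x))\<^sup>2) \<partial>lborel) * ennreal ((2*pi)^DIM('a))"
      by (rule nn_integral_multc) measurable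
    finally show ?thesis by (simp add: mult.commute)
  qed
  also have "ennreal ((2*pi)^DIM('a)) * (\<integral>\<^sup>+x. ennreal ((cmod (f x))\<^sup>2) \<partial>lborel) + ennreal ((2*pi)^DIM('a)) * (\<integral>\<^sup>+x. ennreal ((cmod (f x))\<^sup>2) \<partial>lborel)
      = ennreal (2 * (2*pi)^DIM('a)) * (\<integral>\<^sup>+x. ennreal ((cmod (f x))\<^sup>2) \<partial>lborel)"
  proof -
    have "ennreal (2 * (2*pi)^DIM('a)) * (\<integral>\<^sup>+x. ennreal ((cmod (f x))\<^sup>2) \<partial>lborel) = 2 * (ennreal ((2*pi)^DIM('a)) * (\<integral>\<^sup>+x. ennreal ((cmod (f x))\<^sup>2) \<partial>lborel))"
      by (simp add: ennreal_mult mult.assoc)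
    then show ?thesis by (simp only: mult_2)
  qed
  finally show ?thesis .
qed

end

lemma gw_incseq: "incseq (\<lambda>n. gw (real (Suc n)) \<xi>)"
proof (rule incseq_SucI)
  fix n
  have a: "\<xi> \<bullet> \<xi> \<ge> 0" by simp
  have "(\<xi> \<bullet> \<xi>) / (2 * (real (Suc (Suc n)))\<^sup>2) \<le> (\<xi> \<bullet> \<xi>) / (2 * (real (Suc n))\<^sup>2)"
    using a by (intro divide_left_mono mult_left_mono power_mono) auto
  then show "gw (real (Suc n)) \<xi> \<le> gw (real (Suc (Suc n))) \<xi>"
    unfolding gw_def by simp
qed

lemma gw_lim: "(\<lambda>n. gw (real (Suc n)) \<xi>) \<longlonglongrightarrow> 1"
proof -
  have i: "(\<lambda>n. 1 / real (Suc n)) \<longlonglongrightarrow> 0"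
    using LIMSEQ_Suc[OF lim_const_over_n[of 1]] by simp
  have "(\<lambda>n. - (\<xi> \<bullet> \<xi>) / 2 * ((1 / real (Suc n)) * (1 / real (Suc n)))) \<longlonglongrightarrow> - (\<xi> \<bullet> \<xi>) / 2 * (0 * 0)"
    by (intro tendsto_intros i)
  then have "(\<lambda>n. - (\<xi> \<bullet> \<xi>) / (2 * (real (Suc n))\<^sup>2)) \<longlonglongrightarrow> 0"
    by (simp add: power2_eq_square field_simps)
  then have "(\<lambda>n. exp (- (\<xi> \<bullet> \<xi>) / (2 * (real (Suc n))\<^sup>2))) \<longlonglongrightarrow> exp 0"
    by (intro tendsto_intros)
  then show ?thesis unfolding gw_def by simp
qed

lemma plancherel_ineq:
  fixes f :: "'a::euclidean_space \<Rightarrow> complex"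
  assumes fm[measurable]: "f \<in> borel_measurable lborel" and fi: "integrable lborel f"
  shows "(\<integral>\<^sup>+\<xi>. ennreal ((cmod (ft f \<xi>))\<^sup>2) \<partial>lborel)
           \<le> ennreal (2 * (2*pi)^DIM('a)) * (\<integral>\<^sup>+x. ennreal ((cmod (f x))\<^sup>2) \<partial>lborel)"
proof -
  have pt: "ennreal ((cmod (ft f \<xi>))\<^sup>2) = (SUP n. ennreal (gw (real (Suc n)) \<xi> * (cmod (ft f \<xi>))\<^sup>2))" for \<xi>
  proof -
    have inc: "incseq (\<lambda>n. ennreal (gw (real (Suc n)) \<xi> * (cmod (ft f \<xi>))\<^sup>2))"
      using gw_incseq[of \<xi>] unfolding incseq_def
      by (auto intro!: ennreal_leI mult_right_mono)
    have "(\<lambda>n. ennreal (gw (real (Suc n)) \<xi> * (cmod (ft f \<xi>))\<^sup>2)) \<longlonglongrightarrow> ennreal (1 * (cmod (ft f \<xi>))\<^sup>2)"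
      by (intro tendsto_ennrealI tendsto_intros gw_lim)
    from LIMSEQ_unique[OF LIMSEQ_SUP[OF inc] this] show ?thesis by simp
  qed
  have "(\<integral>\<^sup>+\<xi>. ennreal ((cmod (ft f \<xi>))\<^sup>2) \<partial>lborel) = (\<integral>\<^sup>+\<xi>. (SUP n. ennreal (gw (real (Suc n)) \<xi> * (cmod (ft f \<xi>))\<^sup>2)) \<partial>lborel)"
    by (simp only: pt)
  also have "\<dots> = (SUP n. (\<integral>\<^sup>+\<xi>. ennreal (gw (real (Suc n)) \<xi> * (cmod (ft f \<xi>))\<^sup>2) \<partial>lborel))"
  proof (rule nn_integral_monotone_convergence_SUP)
    show "incseq (\<lambda>n \<xi>. ennreal (gw (real (Suc n)) \<xi> * (cmod (ft f \<xi>))\<^sup>2))"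
      using gw_incseq unfolding incseq_def le_fun_def
      by (auto intro!: ennreal_leI mult_right_mono)
    show "(\<lambda>\<xi>. ennreal (gw (real (Suc n)) \<xi> * (cmod (ft f \<xi>))\<^sup>2)) \<in> borel_measurable lborel" for n
      using ft_measurable[OF fm fi] by measurable
  qed
  also have "\<dots> \<le> ennreal (2 * (2*pi)^DIM('a)) * (\<integral>\<^sup>+x. ennreal ((cmod (f x))\<^sup>2) \<partial>lborel)"
    by (intro SUP_least gauss_bound[OF fm fi]) simp
  finally show ?thesis .
qed

lemma sq_triangle: "(cmod a)\<^sup>2 \<le> 2 * (cmod (a - b))\<^sup>2 + 2 * (cmod b)\<^sup>2"
proof -
  have t: "cmod a \<le> cmod (a - b) + cmod b" using norm_triangle_ineq[of "a - b" b] by simp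
  have "(cmod a)\<^sup>2 \<le> (cmod (a - b) + cmod b)\<^sup>2" using t by (intro power_mono) auto
  also have "\<dots> \<le> 2 * (cmod (a - b))\<^sup>2 + 2 * (cmod b)\<^sup>2"
  proof -
    have "0 \<le> (cmod (a - b) - cmod b)\<^sup>2" by simp
    then show ?thesis by (simp add: power2_sum power2_diff)
  qed
  finally show ?thesis .
qed

lemma G_bound:
  fixes F G :: "'a::euclidean_space \<Rightarrow> complex"
  assumes FL: "F \<in> L2" and FG: "is_fourier_L2 F G"
  shows "(\<integral>\<^sup>+\<xi>. ennreal ((cmod (G \<xi>))\<^sup>2) \<partial>lborel)
           \<le> ennreal (4 * (2*pi)^DIM('a)) * (\<integral>\<^sup>+x. ennreal ((cmod (F x))\<^sup>2) \<partial>lborel)"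
proof -
  have Fm[measurable]: "F \<in> borel_measurable lborel" and Ffin: "(\<integral>\<^sup>+x. ennreal ((cmod (F x))\<^sup>2) \<partial>lborel) < \<infinity>"
    using FL unfolding L2_def by auto
  have Gm[measurable]: "G \<in> borel_measurable lborel" and lim:
    "((\<lambda>R::real. \<integral>\<^sup>+ \<xi>. ennreal ((cmod (G \<xi> -
          (LINT x : cball 0 R | lborel. exp (- \<i> * complex_of_real (x \<bullet> \<xi>)) * F x)))\<^sup>2) \<partial>lborel) \<longlongrightarrow> 0) at_top"
    using FG unfolding is_fourier_L2_def by auto
  define N where "N = (\<integral>\<^sup>+x. ennreal ((cmod (F x))\<^sup>2) \<partial>lborel)"
  define C where "C = ennreal (2 * (2*pi)^DIM('a))"
  define D where "D R = (\<integral>\<^sup>+ \<xi>. ennreal ((cmod (G \<xi> -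
          (LINT x : cball 0 R | lborel. exp (- \<i> * complex_of_real (x \<bullet> \<xi>)) * F x)))\<^sup>2) \<partial>lborel)" for R :: real
  have bnd: "(\<integral>\<^sup>+\<xi>. ennreal ((cmod (G \<xi>))\<^sup>2) \<partial>lborel) \<le> 2 * D R + 2 * (C * N)" for R :: real
  proof -
    define fR where "fR x = indicator (cball 0 R) x *\<^sub>R F x" for x :: 'a
    have fRm[measurable]: "fR \<in> borel_measurable lborel"
      unfolding fR_def by (intro borel_measurable_scaleR borel_measurable_indicator Fm) simp
    have fRi: "integrable lborel fR"
    proof -
      have "(\<integral>\<^sup>+x. ennreal (norm (fR x)) \<partial>lborel) \<le> (\<integral>\<^sup>+x. indicator (cball 0 R) x + ennreal ((cmod (F x))\<^sup>2) \<partial>lborel)"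
      proof (intro nn_integral_mono)
        fix x
        have "cmod (F x) \<le> 1 + (cmod (F x))\<^sup>2"
        proof (cases "cmod (F x) \<le> 1")
          case True then show ?thesis by (smt (verit) zero_le_power2)
        next
          case False
          then have "cmod (F x) \<le> cmod (F x) * cmod (F x)" by (intro mult_le_cancel_left1[THEN iffD2]) auto
          then show ?thesis by (simp add: power2_eq_square)
        qed
        then have "ennreal (cmod (F x)) \<le> 1 + ennreal ((cmod (F x))\<^sup>2)"
          by (metis ennreal_leI ennreal_plus ennreal_1 zero_le_one zero_le_power2)
        then show "ennreal (norm (fR x)) \<le> indicator (cball 0 R) x + ennreal ((cmod (F x))\<^sup>2)"
          unfolding fR_def by (cases "x \<in> cball 0 R") auto
      qed
      also have "\<dots> = emeasure lborel (cball (0::'a) R) + N"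
        unfolding N_def by (subst nn_integral_add) (auto intro: borel_measurable_indicator)
      also have "\<dots> < \<infinity>"
        using emeasure_bounded_finite[of "cball (0::'a) R"] Ffin unfolding N_def by simp
      finally show ?thesis by (auto simp: integrable_iff_bounded)
    qed
    have ftR: "ft fR \<xi> = (LINT x : cball 0 R | lborel. exp (- \<i> * complex_of_real (x \<bullet> \<xi>)) * F x)" for \<xi>
      unfolding ft_def set_lebesgue_integral_def fR_def
      by (intro Bochner_Integration.integral_cong) (auto simp: indicator_def)
    have PR: "(\<integral>\<^sup>+\<xi>. ennreal ((cmod (ft fR \<xi>))\<^sup>2) \<partial>lborel) \<le> C * N"
    proof -
      have "(\<integral>\<^sup>+\<xi>. ennreal ((cmod (ft fR \<xi>))\<^sup>2) \<partial>lborel) \<le> C * (\<integral>\<^sup>+x. ennreal ((cmod (fR x))\<^sup>2) \<partial>lborel)"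
        unfolding C_def by (rule plancherel_ineq[OF fRm fRi])
      also have "(\<integral>\<^sup>+x. ennreal ((cmod (fR x))\<^sup>2) \<partial>lborel) \<le> N"
        unfolding N_def fR_def
        by (intro nn_integral_mono) (auto simp: indicator_def intro!: ennreal_leI)
      finally show ?thesis by (simp add: mult_left_mono)
    qed
    have ftm[measurable]: "ft fR \<in> borel_measurable lborel" by (rule ft_measurable[OF fRm fRi])
    have "(\<integral>\<^sup>+\<xi>. ennreal ((cmod (G \<xi>))\<^sup>2) \<partial>lborel)
        \<le> (\<integral>\<^sup>+\<xi>. 2 * ennreal ((cmod (G \<xi> - ft fR \<xi>))\<^sup>2) + 2 * ennreal ((cmod (ft fR \<xi>))\<^sup>2) \<partial>lborel)"
    proof (intro nn_integral_mono)
      fix \<xi>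
      show "ennreal ((cmod (G \<xi>))\<^sup>2) \<le> 2 * ennreal ((cmod (G \<xi> - ft fR \<xi>))\<^sup>2) + 2 * ennreal ((cmod (ft fR \<xi>))\<^sup>2)"
      proof -
        have e: "ennreal (2 * (cmod (G \<xi> - ft fR \<xi>))\<^sup>2 + 2 * (cmod (ft fR \<xi>))\<^sup>2) = 2 * ennreal ((cmod (G \<xi> - ft fR \<xi>))\<^sup>2) + 2 * ennreal ((cmod (ft fR \<xi>))\<^sup>2)"
          by (simp add: ennreal_mult)
        show ?thesis unfolding e[symmetric] using sq_triangle[of "G \<xi>" "ft fR \<xi>"] by (rule ennreal_leI)
      qed
    qed
    also have "\<dots> = 2 * (\<integral>\<^sup>+\<xi>. ennreal ((cmod (G \<xi> - ft fR \<xi>))\<^sup>2) \<partial>lborel) + 2 * (\<integral>\<^sup>+\<xi>. ennreal ((cmod (ft fR \<xi>))\<^sup>2) \<partial>lborel)"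
      by (subst nn_integral_add) (auto simp: nn_integral_cmult)
    also have "(\<integral>\<^sup>+\<xi>. ennreal ((cmod (G \<xi> - ft fR \<xi>))\<^sup>2) \<partial>lborel) = D R"
      unfolding D_def ftR ..
    also have "2 * (\<integral>\<^sup>+\<xi>. ennreal ((cmod (ft fR \<xi>))\<^sup>2) \<partial>lborel) \<le> 2 * (C * N)"
      using PR by (rule mult_left_mono) simp
    finally show ?thesis by simp
  qed
  have limD: "(D \<longlongrightarrow> 0) at_top" unfolding D_def[abs_def] by (rule lim)
  have "((\<lambda>R. 2 * D R + 2 * (C * N)) \<longlongrightarrow> 2 * 0 + 2 * (C * N)) at_top"
    by (intro tendsto_add tendsto_const ennreal_tendsto_cmult limD) auto
  then have "(\<integral>\<^sup>+\<xi>. ennreal ((cmod (G \<xi>))\<^sup>2) \<partial>lborel) \<le> 2 * (C * N)"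
    by (intro tendsto_le[OF trivial_limit_at_top_linorder _ tendsto_const]) (auto intro: always_eventually bnd)
  also have "2 * (C * N) = ennreal (4 * (2*pi)^DIM('a)) * N"
  proof -
    have e: "ennreal (4 * (2*pi)^DIM('a)) = 2 * C"
      unfolding C_def using ennreal_mult[of 2 "2*(2*pi)^DIM('a)"] by simp
    show ?thesis unfolding e by (simp add: mult.assoc)
  qed
  finally show ?thesis unfolding N_def .
qed

lemma inner2: "(x::real^2) \<bullet> y = x$1 * y$1 + x$2 * y$2"
  by (simp add: inner_vec_def sum_2)

lemma theta_facts:
  assumes "w \<in> Theta j"
  shows "0 < w$1" "w$1 < 2 powr (-10) * w$2" "norm w \<le> 2 powr (real j + 1)" "0 < w$2" "w \<noteq> 0"
proof -
  show a: "0 < w$1" "w$1 < 2 powr (-10) * w$2" "norm w \<le> 2 powr (real j + 1)"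
    using assms unfolding Theta_def by auto
  show "0 < w$2"
  proof (rule ccontr)
    assume "\<not> 0 < w$2"
    then have "2 powr (-10) * w$2 \<le> 0" by (simp add: mult_nonneg_nonpos)
    with a show False by simp
  qed
  then show "w \<noteq> 0" by auto
qed

lemma geom:
  fixes \<xi> \<eta> :: "real^2"
  assumes e: "\<eta> \<in> Theta j" and w: "\<xi> - \<eta> \<in> Theta j" and ang: "vec_angle \<xi> \<eta> \<le> \<alpha>"
  shows "\<bar>\<eta>$2\<bar> \<le> 2 powr (real j + 1)"
    and "\<bar>\<eta>$1 - (\<xi>$1 / \<xi>$2) * \<eta>$2\<bar> \<le> 2 * \<alpha> * 2 powr (real j + 1)"
proof -
  define r where "r = 2 powr (real j + 1)"
  note E = theta_facts[OF e] and W = theta_facts[OF w]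
  show "\<bar>\<eta>$2\<bar> \<le> 2 powr (real j + 1)"
    using component_le_norm_cart[of \<eta> 2] E(3) by simp
  have x1: "\<xi>$1 = \<eta>$1 + (\<xi> - \<eta>)$1" and x2: "\<xi>$2 = \<eta>$2 + (\<xi> - \<eta>)$2" by simp_all
  have p2: "2 powr (-10::real) \<le> 1" using powr_mono[of "-10::real" 0 2] by simp
  have a1: "0 < \<xi>$1" using x1 E(1) W(1) by simp
  have a2: "0 < \<xi>$2" using x2 E(4) W(4) by simp
  have a12: "\<xi>$1 \<le> \<xi>$2"
  proof -
    have "\<xi>$1 < 2 powr (-10) * \<eta>$2 + 2 powr (-10) * (\<xi> - \<eta>)$2" using x1 E(2) W(2) by simp
    also have "\<dots> = 2 powr (-10) * \<xi>$2" using x2 by (simp add: algebra_simps)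
    also have "\<dots> \<le> \<xi>$2" using p2 a2 by (simp add: mult_le_cancel_right1)
    finally show ?thesis by simp
  qed
  have nx: "norm \<xi> \<le> 2 * \<xi>$2"
    using norm_le_l1_cart[of \<xi>] a1 a2 a12 by (simp add: sum_2)
  have ne: "norm \<eta> \<le> r" using E(3) unfolding r_def .
  have xnz: "\<xi> \<noteq> 0" using a2 by auto
  define q where "q = (\<xi> \<bullet> \<eta>) / (norm \<xi> * norm \<eta>)"
  have npos: "norm \<xi> * norm \<eta> > 0" using xnz E(5) by simp
  have qb: "\<bar>q\<bar> \<le> 1"
  proof -
    have cs: "\<bar>\<xi> \<bullet> \<eta>\<bar> \<le> norm \<xi> * norm \<eta>" by (rule Cauchy_Schwarz_ineq2)
    have "\<bar>q\<bar> = \<bar>\<xi> \<bullet> \<eta>\<bar> / (norm \<xi> * norm \<eta>)"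
      unfolding q_def abs_divide using npos by (metis abs_of_pos)
    also have "\<dots> \<le> 1" using cs npos by (metis divide_le_eq_1_pos)
    finally show ?thesis .
  qed
  have th: "arccos q \<le> \<alpha>" using ang unfolding vec_angle_def q_def .
  have th0: "0 \<le> arccos q" using qb by (intro arccos_lbound) auto
  have s: "sqrt (1 - q\<^sup>2) \<le> \<alpha>"
  proof -
    have "sin (arccos q) = sqrt (1 - q\<^sup>2)" using qb by (intro sin_arccos) auto
    moreover have "sin (arccos q) \<le> arccos q" using th0 by (rule sin_x_le_x)
    ultimately show ?thesis using th by simp
  qed
  have s0: "0 \<le> sqrt (1 - q\<^sup>2)" using qb by (simp add: abs_square_le_1)
  define cr where "cr = \<xi>$1 * \<eta>$2 - \<xi>$2 * \<eta>$1"
  have lag: "cr\<^sup>2 = (norm \<xi>)\<^sup>2 * (norm \<eta>)\<^sup>2 - (\<xi> \<bullet> \<eta>)\<^sup>2"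
    unfolding cr_def power2_norm_eq_inner inner2 by algebra
  have dot: "(\<xi> \<bullet> \<eta>) = q * (norm \<xi> * norm \<eta>)" unfolding q_def using npos by simp
  have sq: "(sqrt (1 - q\<^sup>2))\<^sup>2 = 1 - q\<^sup>2" using qb by (simp add: abs_square_le_1)
  have "cr\<^sup>2 = (norm \<xi> * norm \<eta>)\<^sup>2 * (1 - q\<^sup>2)"
    unfolding lag dot by algebra
  also have "\<dots> = (norm \<xi> * norm \<eta> * sqrt (1 - q\<^sup>2))\<^sup>2"
    unfolding power_mult_distrib[of _ "sqrt (1 - q\<^sup>2)"] sq ..
  finally have "\<bar>cr\<bar>\<^sup>2 = (norm \<xi> * norm \<eta> * sqrt (1 - q\<^sup>2))\<^sup>2" by simp
  then have "\<bar>cr\<bar> = norm \<xi> * norm \<eta> * sqrt (1 - q\<^sup>2)"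
    by (rule power2_eq_imp_eq) (use npos s0 in auto)
  also have "\<dots> \<le> (2 * \<xi>$2) * r * \<alpha>"
    using nx ne s s0 a2 by (intro mult_mono) (auto simp: r_def)
  finally have crb: "\<bar>cr\<bar> \<le> (2 * \<xi>$2) * r * \<alpha>" .
  have "\<eta>$1 - (\<xi>$1 / \<xi>$2) * \<eta>$2 = - cr / \<xi>$2"
    unfolding cr_def using a2 by (simp add: field_simps)
  then have "\<bar>\<eta>$1 - (\<xi>$1 / \<xi>$2) * \<eta>$2\<bar> = \<bar>cr\<bar> / \<xi>$2" using a2 by simp
  also have "\<dots> \<le> 2 * \<alpha> * r" using crb a2 by (simp add: divide_le_eq mult_ac)
  finally show "\<bar>\<eta>$1 - (\<xi>$1 / \<xi>$2) * \<eta>$2\<bar> \<le> 2 * \<alpha> * 2 powr (real j + 1)" unfolding r_def .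
qed

lemma shear_area:
  fixes r \<delta> c :: real
  assumes r0: "0 \<le> r" and d0: "0 \<le> \<delta>"
  shows "emeasure lborel {\<eta>::real^2. \<bar>\<eta>$2\<bar> \<le> r \<and> \<bar>\<eta>$1 - c * \<eta>$2\<bar> \<le> \<delta>} = ennreal (4 * r * \<delta>)"
proof -
  define L :: "real^2 \<Rightarrow> real^2" where "L u = (\<chi> i. if i = 1 then u$1 + c * u$2 else u$2)" for u
  define a :: "real^2" where "a = (\<chi> i. if i = 1 then - \<delta> else - r)"
  define B where "B = cbox a (- a)"
  define A where "A = {\<eta>::real^2. \<bar>\<eta>$2\<bar> \<le> r \<and> \<bar>\<eta>$1 - c * \<eta>$2\<bar> \<le> \<delta>}"
  have lin: "linear L"
    unfolding L_def by (auto simp: linear_iff vec_eq_iff algebra_simps)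
  have Bmem: "u \<in> B \<longleftrightarrow> \<bar>u$1\<bar> \<le> \<delta> \<and> \<bar>u$2\<bar> \<le> r" for u
    unfolding B_def a_def mem_box_cart by (auto simp: forall_2)
  have AL: "A = L ` B"
  proof (intro set_eqI iffI)
    fix \<eta> assume "\<eta> \<in> A"
    then have "(\<chi> i. if i = 1 then \<eta>$1 - c * \<eta>$2 else \<eta>$2) \<in> B" and "\<eta> = L (\<chi> i. if i = 1 then \<eta>$1 - c * \<eta>$2 else \<eta>$2)"
      unfolding A_def Bmem L_def by (auto simp: vec_eq_iff forall_2)
    then show "\<eta> \<in> L ` B" by blast
  next
    fix \<eta> assume "\<eta> \<in> L ` B"
    then obtain u where "u \<in> B" "\<eta> = L u" by blast
    then show "\<eta> \<in> A" unfolding A_def Bmem L_def by auto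
  qed
  have detL: "det (matrix L) = 1"
    unfolding det_2 matrix_def L_def by (simp add: axis_def)
  have mB: "measure lebesgue B = 4 * r * \<delta>"
  proof -
    have ne: "B \<noteq> {}" using Bmem[of 0] r0 d0 by auto
    have "measure lebesgue B = measure lborel B" unfolding B_def by simp
    also have "\<dots> = (\<Prod>i\<in>UNIV. (- a)$i - a$i)" unfolding B_def using ne[unfolded B_def] by (rule content_cbox_cart)
    also have "\<dots> = 4 * r * \<delta>" unfolding a_def by (simp add: UNIV_2)
    finally show ?thesis .
  qed
  have Bl: "B \<in> lmeasurable" unfolding B_def by simp
  have Al: "A \<in> lmeasurable" unfolding AL by (rule measurable_linear_image[OF lin Bl])
  have mA: "measure lebesgue A = 4 * r * \<delta>"
    unfolding AL measure_linear_image[OF lin Bl] detL mB by simp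
  have Ab: "A \<in> sets borel"
    unfolding A_def by measurable
  have "emeasure lborel A = emeasure lebesgue A" using Ab by simp
  also have "\<dots> = measure lebesgue A" using Al by (rule emeasure_eq_measure2)
  finally have "emeasure lborel A = ennreal (4 * r * \<delta>)" unfolding mA .
  then show ?thesis unfolding A_def .
qed

lemma cs_ennreal:
  fixes g :: "'a \<Rightarrow> real"
  assumes gm[measurable]: "g \<in> borel_measurable M" and Am[measurable]: "A \<in> sets M" and g0: "\<And>x. g x \<ge> 0"
  shows "(\<integral>\<^sup>+x. indicator A x * ennreal (g x) \<partial>M)\<^sup>2 \<le> emeasure M A * (\<integral>\<^sup>+x. indicator A x * ennreal ((g x)\<^sup>2) \<partial>M)"
proof -
  define I where "I = (\<integral>\<^sup>+x. indicator A x * ennreal (g x) \<partial>M)"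
  define a where "a = emeasure M A"
  define Q where "Q = (\<integral>\<^sup>+x. indicator A x * ennreal ((g x)\<^sup>2) \<partial>M)"
  show ?thesis
  proof (cases "a = 0 \<or> Q = 0")
    case True
    have "I = 0"
    proof (cases "a = 0")
      case True
      then have "AE x in M. x \<notin> A" unfolding a_def by (intro AE_not_in) (auto simp: null_sets_def)
      then show "I = 0" unfolding I_def by (subst nn_integral_0_iff_AE) (auto elim!: eventually_mono)
    next
      case False
      then have "Q = 0" using True by simp
      then have "AE x in M. indicator A x * ennreal ((g x)\<^sup>2) = 0"
        unfolding Q_def by (subst (asm) nn_integral_0_iff_AE) auto
      then show "I = 0" unfolding I_def
        by (subst nn_integral_0_iff_AE) (auto elim!: eventually_mono simp: g0 split: split_indicator)
    qed
    then show ?thesis unfolding I_def[symmetric] by simp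
  next
    case False
    then have a0: "a \<noteq> 0" and Q0: "Q \<noteq> 0" by auto
    show ?thesis
    proof (cases "a = \<infinity> \<or> Q = \<infinity>")
      case True
      then have "a * Q = \<infinity>" using a0 Q0 by (auto simp: ennreal_mult_eq_top_iff)
      then show ?thesis unfolding a_def[symmetric] Q_def[symmetric] by simp
    next
      case False
      then have at: "a \<noteq> top" and qt: "Q \<noteq> top" by auto
      obtain ar where ar': "a = ennreal ar" "ar \<ge> 0" using at by (cases a) auto
      obtain qr where qr': "Q = ennreal qr" "qr \<ge> 0" using qt by (cases Q) auto
      have ar: "a = ennreal ar" "ar > 0" using ar' a0 by auto
      have qr: "Q = ennreal qr" "qr > 0" using qr' Q0 by auto
      define s where "s = sqrt (ar * qr)"
      have s0: "s > 0" unfolding s_def using ar qr by simp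
      have ss: "s * s = ar * qr" unfolding s_def using ar qr by simp
      define l where "l = s / ar"
      have l0: "l > 0" unfolding l_def using s0 ar by simp
      have pt: "indicator A x * ennreal (g x) \<le> ennreal (l/2) * indicator A x + ennreal (1/(2*l)) * (indicator A x * ennreal ((g x)\<^sup>2))" for x
      proof (cases "x \<in> A")
        case True
        have "g x \<le> l/2 + 1/(2*l) * (g x)\<^sup>2"
        proof -
          have "0 \<le> (g x - l)\<^sup>2" by simp
          then have "2 * l * g x \<le> l * l + (g x)\<^sup>2" by (simp add: power2_diff power2_eq_square algebra_simps)
          then show ?thesis using l0 by (simp add: field_simps power2_eq_square)
        qed
        then have "ennreal (g x) \<le> ennreal (l/2 + 1/(2*l) * (g x)\<^sup>2)" by (rule ennreal_leI)
        also have "\<dots> = ennreal (l/2) + ennreal (1/(2*l) * (g x)\<^sup>2)"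
          using l0 by (intro ennreal_plus) auto
        also have "ennreal (1/(2*l) * (g x)\<^sup>2) = ennreal (1/(2*l)) * ennreal ((g x)\<^sup>2)"
          using l0 by (intro ennreal_mult) auto
        finally show ?thesis using True by simp
      qed simp
      have "I \<le> (\<integral>\<^sup>+x. ennreal (l/2) * indicator A x + ennreal (1/(2*l)) * (indicator A x * ennreal ((g x)\<^sup>2)) \<partial>M)"
        unfolding I_def by (intro nn_integral_mono pt)
      also have "\<dots> = ennreal (l/2) * a + ennreal (1/(2*l)) * Q"
        unfolding a_def Q_def by (subst nn_integral_add) (auto simp: nn_integral_cmult)
      also have "\<dots> = ennreal (l/2 * ar + 1/(2*l) * qr)"
        using ar qr l0 by (simp add: ennreal_plus[symmetric] ennreal_mult[symmetric] del: ennreal_plus)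
      also have "l/2 * ar + 1/(2*l) * qr = s"
      proof -
        have "l/2 * ar = s/2" unfolding l_def using ar by simp
        moreover have "1/(2*l) * qr = s/2" unfolding l_def using ar s0 ss by (simp add: field_simps)
        ultimately show ?thesis by simp
      qed
      finally have Is: "I \<le> ennreal s" .
      have "I\<^sup>2 \<le> (ennreal s)\<^sup>2" using Is by (intro power_mono) auto
      also have "\<dots> = ennreal (s * s)" using s0 by (simp add: power2_eq_square ennreal_mult)
      also have "\<dots> = ennreal (ar * qr)" using ss by simp
      also have "\<dots> = a * Q" using ar qr by (simp add: ennreal_mult)
      finally show ?thesis unfolding I_def a_def Q_def .
    qed
  qed
qed

lemma sup_norm_ge: "t > 0 \<Longrightarrow> ennreal (cmod (b t \<xi> \<eta>)) \<le> sup_norm b"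
  unfolding sup_norm_def by (rule SUP_upper2[of "(t, \<xi>, \<eta>)"]) auto

lemma shift_map_meas:
  "(\<lambda>\<eta>::real^2. (\<xi> - \<eta>, \<eta>)) \<in> borel \<rightarrow>\<^sub>M (borel :: ((real^2) \<times> (real^2)) measure)"
  by (rule borel_measurable_continuous_onI) (intro continuous_intros)

lemma shift_map_meas2:
  "(\<lambda>p::(real^2) \<times> (real^2). (fst p - snd p, snd p)) \<in> borel \<rightarrow>\<^sub>M (borel :: ((real^2) \<times> (real^2)) measure)"
  by (rule borel_measurable_continuous_onI) (intro continuous_intros)

lemma shift_tonelli:
  fixes h :: "(real^2) \<times> (real^2) \<Rightarrow> ennreal"
  assumes hm: "h \<in> borel_measurable borel"
  shows "(\<integral>\<^sup>+\<xi>. \<integral>\<^sup>+\<eta>. h (\<xi> - \<eta>, \<eta>) \<partial>lborel \<partial>lborel) = (\<integral>\<^sup>+p. h p \<partial>lborel)"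
proof -
  have km: "(\<lambda>p::(real^2) \<times> (real^2). h (fst p - snd p, snd p)) \<in> borel_measurable (lborel \<Otimes>\<^sub>M lborel)"
    unfolding lborel_prod using measurable_comp[OF shift_map_meas2 hm] by (simp add: comp_def)
  have hm2: "h \<in> borel_measurable (lborel \<Otimes>\<^sub>M lborel)" unfolding lborel_prod using hm by simp
  have "(\<integral>\<^sup>+\<xi>. \<integral>\<^sup>+\<eta>. h (\<xi> - \<eta>, \<eta>) \<partial>lborel \<partial>lborel) = (\<integral>\<^sup>+\<eta>. \<integral>\<^sup>+\<xi>. h (\<xi> - \<eta>, \<eta>) \<partial>lborel \<partial>lborel)"
    using lborel_pair.Fubini[OF km] by simp
  also have "\<dots> = (\<integral>\<^sup>+\<eta>. \<integral>\<^sup>+\<xi>. h (\<xi>, \<eta>) \<partial>lborel \<partial>lborel)"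
  proof (rule nn_integral_cong)
    fix \<eta> :: "real^2"
    assume "\<eta> \<in> space lborel"
    have m: "(\<lambda>z. h (z, \<eta>)) \<in> borel_measurable borel"
    proof -
      have "(\<lambda>z::real^2. (z, \<eta>)) \<in> borel \<rightarrow>\<^sub>M (borel :: ((real^2) \<times> (real^2)) measure)"
        by (rule borel_measurable_continuous_onI) (intro continuous_intros)
      from measurable_comp[OF this hm] show ?thesis unfolding comp_def .
    qed
    show "(\<integral>\<^sup>+\<xi>. h (\<xi> - \<eta>, \<eta>) \<partial>lborel) = (\<integral>\<^sup>+\<xi>. h (\<xi>, \<eta>) \<partial>lborel)"
      using nn_integral_translate[OF m, of "- \<eta>"] by simp
  qed
  also have "\<dots> = (\<integral>\<^sup>+p. h p \<partial>(lborel \<Otimes>\<^sub>M lborel))"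
    by (rule lborel_pair.nn_integral_snd[OF hm2])
  also have "\<dots> = (\<integral>\<^sup>+p. h p \<partial>lborel)" by (simp add: lborel_prod)
  finally show ?thesis .
qed

lemma S_pointwise:
  fixes G :: "(real^2) \<times> (real^2) \<Rightarrow> complex" and s t :: real
  assumes ad: "adapted j m b" and t0: "t > 0" and Gm: "G \<in> borel_measurable borel"
  shows "ennreal ((cmod (S_op s G b \<xi> t))\<^sup>2) \<le> (sup_norm b)\<^sup>2 * ennreal (8 * 2 powr (5 - real m) * (2 powr (real j + 1))\<^sup>2) * (\<integral>\<^sup>+\<eta>. ennreal ((cmod (G (\<xi> - \<eta>, \<eta>)))\<^sup>2) \<partial>lborel)"
proof -
  define r where "r = 2 powr (real j + 1)"
  define \<alpha> where "\<alpha> = 2 powr (5 - real m)"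
  define \<delta> where "\<delta> = 2 * \<alpha> * r"
  define c where "c = \<xi>$1 / \<xi>$2"
  define A where "A = {\<eta>::real^2. \<bar>\<eta>$2\<bar> \<le> r \<and> \<bar>\<eta>$1 - c * \<eta>$2\<bar> \<le> \<delta>}"
  define B where "B = sup_norm b"
  define g where "g \<eta> = cmod (G (\<xi> - \<eta>, \<eta>))" for \<eta>
  define h where "h \<eta> = exp (complex_of_real s * \<i> * complex_of_real (t * (norm (\<xi> - \<eta>) + norm \<eta>))) * b t \<xi> \<eta> * G (\<xi> - \<eta>, \<eta>)" for \<eta>
  have r0: "r \<ge> 0" and a0: "\<alpha> \<ge> 0" and d0: "\<delta> \<ge> 0" unfolding r_def \<alpha>_def \<delta>_def by auto
  have Gs: "(\<lambda>\<eta>. G (\<xi> - \<eta>, \<eta>)) \<in> borel_measurable borel"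
    using measurable_comp[OF shift_map_meas Gm] unfolding comp_def .
  have gm[measurable]: "g \<in> borel_measurable lborel"
    unfolding g_def using Gs by simp
  have Am[measurable]: "A \<in> sets lborel" unfolding A_def by measurable
  have Ab[measurable]: "A \<in> sets borel" unfolding A_def by measurable
  have gb[measurable]: "(\<lambda>x. cmod (G (\<xi> - x, x))) \<in> borel_measurable borel" using Gs by measurable
  have nh: "norm (h \<eta>) = cmod (b t \<xi> \<eta>) * g \<eta>" for \<eta>
    unfolding h_def g_def by (simp add: norm_mult norm_exp_eq_Re)
  have step1: "ennreal (cmod (S_op s G b \<xi> t)) \<le> (\<integral>\<^sup>+\<eta>. ennreal (norm (h \<eta>)) \<partial>lborel)"
  proof (cases "integrable lborel h")
    case True
    then show ?thesis unfolding S_op_def h_def[symmetric] by (rule integral_norm_bound_ennreal)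
  next
    case False
    then show ?thesis unfolding S_op_def h_def[symmetric] by (simp add: not_integrable_integral_eq)
  qed
  have step2: "(\<integral>\<^sup>+\<eta>. ennreal (norm (h \<eta>)) \<partial>lborel) \<le> (\<integral>\<^sup>+\<eta>. B * (indicator A \<eta> * ennreal (g \<eta>)) \<partial>lborel)"
  proof (intro nn_integral_mono)
    fix \<eta> :: "real^2"
    show "ennreal (norm (h \<eta>)) \<le> B * (indicator A \<eta> * ennreal (g \<eta>))"
    proof (cases "b t \<xi> \<eta> = 0")
      case True
      then show ?thesis by (simp add: nh)
    next
      case False
      then have "\<eta> \<in> Theta j" "\<xi> - \<eta> \<in> Theta j" "vec_angle \<xi> \<eta> \<le> \<alpha>"
        using ad t0 unfolding adapted_def \<alpha>_def by auto
      from geom[OF this] have "\<eta> \<in> A" unfolding A_def r_def \<delta>_def c_def by simp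
      have "ennreal (norm (h \<eta>)) = ennreal (cmod (b t \<xi> \<eta>)) * ennreal (g \<eta>)"
        unfolding nh by (simp add: ennreal_mult g_def)
      also have "\<dots> \<le> B * ennreal (g \<eta>)"
        unfolding B_def using sup_norm_ge[OF t0] by (rule mult_right_mono) simp
      finally show ?thesis using \<open>\<eta> \<in> A\<close> by simp
    qed
  qed
  define I where "I = (\<integral>\<^sup>+\<eta>. indicator A \<eta> * ennreal (g \<eta>) \<partial>lborel)"
  have step3: "(\<integral>\<^sup>+\<eta>. B * (indicator A \<eta> * ennreal (g \<eta>)) \<partial>lborel) = B * I"
    unfolding I_def by (rule nn_integral_cmult) measurable
  have cs: "I\<^sup>2 \<le> emeasure lborel A * (\<integral>\<^sup>+\<eta>. indicator A \<eta> * ennreal ((g \<eta>)\<^sup>2) \<partial>lborel)"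
    unfolding I_def by (rule cs_ennreal) (auto simp: g_def)
  have eA: "emeasure lborel A = ennreal (8 * 2 powr (5 - real m) * (2 powr (real j + 1))\<^sup>2)"
  proof -
    have "emeasure lborel A = ennreal (4 * r * \<delta>)" unfolding A_def by (rule shear_area[OF r0 d0])
    also have "4 * r * \<delta> = 8 * 2 powr (5 - real m) * (2 powr (real j + 1))\<^sup>2"
      unfolding \<delta>_def r_def \<alpha>_def by (simp add: power2_eq_square mult_ac)
    finally show ?thesis .
  qed
  have Qle: "(\<integral>\<^sup>+\<eta>. indicator A \<eta> * ennreal ((g \<eta>)\<^sup>2) \<partial>lborel) \<le> (\<integral>\<^sup>+\<eta>. ennreal ((cmod (G (\<xi> - \<eta>, \<eta>)))\<^sup>2) \<partial>lborel)"
    by (intro nn_integral_mono) (auto simp: g_def split: split_indicator)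
  have "ennreal ((cmod (S_op s G b \<xi> t))\<^sup>2) = (ennreal (cmod (S_op s G b \<xi> t)))\<^sup>2"
    by (simp add: ennreal_power)
  also have "\<dots> \<le> (B * I)\<^sup>2"
    using step1 step2 step3 by (intro power_mono) auto
  also have "\<dots> = B\<^sup>2 * I\<^sup>2" by (simp add: power_mult_distrib)
  also have "\<dots> \<le> B\<^sup>2 * (emeasure lborel A * (\<integral>\<^sup>+\<eta>. indicator A \<eta> * ennreal ((g \<eta>)\<^sup>2) \<partial>lborel))"
    using cs by (rule mult_left_mono) simp
  also have "\<dots> \<le> B\<^sup>2 * (emeasure lborel A * (\<integral>\<^sup>+\<eta>. ennreal ((cmod (G (\<xi> - \<eta>, \<eta>)))\<^sup>2) \<partial>lborel))"
    using Qle by (intro mult_left_mono) auto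
  finally show ?thesis unfolding eA B_def by (simp add: mult.assoc)
qed

lemma powr_arith:
  "8 * 2 powr (5 - real m) * (2 powr (real j + 1))\<^sup>2 = (2::real) powr 10 * (2 powr (real j - real m / 2))\<^sup>2"
proof -
  have "(8::real) = 2 powr 3" by simp
  then have "8 * 2 powr (5 - real m) * (2 powr (real j + 1))\<^sup>2 = 2 powr 3 * 2 powr (5 - real m) * (2 powr (real j + 1) * 2 powr (real j + 1))"
    by (simp add: power2_eq_square)
  also have "\<dots> = 2 powr (3 + (5 - real m) + ((real j + 1) + (real j + 1)))"
    by (simp only: powr_add)
  also have "\<dots> = 2 powr (10 + ((real j - real m / 2) + (real j - real m / 2)))"
    by (simp add: algebra_simps)
  also have "\<dots> = (2::real) powr 10 * (2 powr (real j - real m / 2))\<^sup>2"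
    by (simp only: powr_add power2_eq_square)
  finally show ?thesis .
qed

theorem proposition4p2:
  shows "\<exists>c::real. c > 0 \<and>
    (\<forall>(s::real) (j::nat) (m::nat) b (E::real set) (F :: (real^2) \<times> (real^2) \<Rightarrow> complex) G.
       s \<in> {1, -1} \<longrightarrow> j \<ge> 1 \<longrightarrow> m \<ge> 1 \<longrightarrow> adapted j m b \<longrightarrow>
       finite E \<longrightarrow> E \<subseteq> {1..2} \<longrightarrow> F \<in> L2 \<longrightarrow> is_fourier_L2 F G \<longrightarrow>
       (\<Sum>t\<in>E. \<integral>\<^sup>+ \<xi>. ennreal ((cmod (S_op s G b \<xi> t))\<^sup>2) \<partial>lborel)
         \<le> ennreal ((c * 2 powr (real j - real m / 2))\<^sup>2 * real (card E))
           * (sup_norm b)\<^sup>2 * (\<integral>\<^sup>+ x. ennreal ((cmod (F x))\<^sup>2) \<partial>lborel))"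
proof -
  define K :: real where "K = 4 * (2*pi)^DIM((real^2) \<times> (real^2))"
  define c where "c = sqrt (2 powr 10 * K)"
  have K0: "K > 0" unfolding K_def by simp
  have c0: "c > 0" unfolding c_def using K0 by simp
  have c2: "c\<^sup>2 = 2 powr 10 * K" unfolding c_def using K0 by simp
  show ?thesis
  proof (intro exI[of _ c] conjI c0 allI impI)
    fix s :: real and j m :: nat and b and E :: "real set" and F G :: "(real^2) \<times> (real^2) \<Rightarrow> complex"
    assume ad: "adapted j m b" and fE: "finite E" and E12: "E \<subseteq> {1..2}" and FL: "F \<in> L2" and FG: "is_fourier_L2 F G"
    define B where "B = sup_norm b"
    define M :: real where "M = 8 * 2 powr (5 - real m) * (2 powr (real j + 1))\<^sup>2"
    define N where "N = (\<integral>\<^sup>+ x. ennreal ((cmod (F x))\<^sup>2) \<partial>lborel)"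
    have Gm[measurable]: "G \<in> borel_measurable borel" using FG unfolding is_fourier_L2_def by simp
    have GN: "(\<integral>\<^sup>+p. ennreal ((cmod (G p))\<^sup>2) \<partial>lborel) \<le> ennreal K * N"
      unfolding K_def N_def by (rule G_bound[OF FL FG])
    have jm: "(\<lambda>p::(real^2) \<times> (real^2). ennreal ((cmod (G (fst p - snd p, snd p)))\<^sup>2)) \<in> borel_measurable (lborel \<Otimes>\<^sub>M lborel)"
    proof -
      have "(\<lambda>p::(real^2) \<times> (real^2). G (fst p - snd p, snd p)) \<in> borel_measurable borel"
        using measurable_comp[OF shift_map_meas2 Gm] unfolding comp_def .
      then show ?thesis unfolding lborel_prod by measurable
    qed
    have inm: "(\<lambda>\<xi>. \<integral>\<^sup>+\<eta>. ennreal ((cmod (G (\<xi> - \<eta>, \<eta>)))\<^sup>2) \<partial>lborel) \<in> borel_measurable lborel"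
      using lborel.borel_measurable_nn_integral[of "\<lambda>\<xi> \<eta>. ennreal ((cmod (G (\<xi> - \<eta>, \<eta>)))\<^sup>2)" lborel] jm
      by (simp add: split_beta')
    have hm: "(\<lambda>p. ennreal ((cmod (G p))\<^sup>2)) \<in> borel_measurable borel" by measurable
    have each: "(\<integral>\<^sup>+ \<xi>. ennreal ((cmod (S_op s G b \<xi> t))\<^sup>2) \<partial>lborel) \<le> B\<^sup>2 * ennreal M * (ennreal K * N)"
      if tE: "t \<in> E" for t
    proof -
      have t0: "t > 0" using tE E12 by force
      have "(\<integral>\<^sup>+ \<xi>. ennreal ((cmod (S_op s G b \<xi> t))\<^sup>2) \<partial>lborel)
          \<le> (\<integral>\<^sup>+ \<xi>. B\<^sup>2 * ennreal M * (\<integral>\<^sup>+\<eta>. ennreal ((cmod (G (\<xi> - \<eta>, \<eta>)))\<^sup>2) \<partial>lborel) \<partial>lborel)"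
        unfolding B_def M_def by (intro nn_integral_mono S_pointwise[OF ad t0 Gm])
      also have "\<dots> = B\<^sup>2 * ennreal M * (\<integral>\<^sup>+ \<xi>. \<integral>\<^sup>+\<eta>. ennreal ((cmod (G (\<xi> - \<eta>, \<eta>)))\<^sup>2) \<partial>lborel \<partial>lborel)"
        by (rule nn_integral_cmult[OF inm])
      also have "(\<integral>\<^sup>+ \<xi>. \<integral>\<^sup>+\<eta>. ennreal ((cmod (G (\<xi> - \<eta>, \<eta>)))\<^sup>2) \<partial>lborel \<partial>lborel) = (\<integral>\<^sup>+p. ennreal ((cmod (G p))\<^sup>2) \<partial>lborel)"
        by (rule shift_tonelli[OF hm])
      also have "B\<^sup>2 * ennreal M * (\<integral>\<^sup>+p. ennreal ((cmod (G p))\<^sup>2) \<partial>lborel) \<le> B\<^sup>2 * ennreal M * (ennreal K * N)"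
        using GN by (rule mult_left_mono) simp
      finally show ?thesis .
    qed
    have "(\<Sum>t\<in>E. \<integral>\<^sup>+ \<xi>. ennreal ((cmod (S_op s G b \<xi> t))\<^sup>2) \<partial>lborel) \<le> (\<Sum>t\<in>E. B\<^sup>2 * ennreal M * (ennreal K * N))"
      by (intro sum_mono each)
    also have "\<dots> = of_nat (card E) * (B\<^sup>2 * ennreal M * (ennreal K * N))" by simp
    also have "\<dots> = ennreal ((c * 2 powr (real j - real m / 2))\<^sup>2 * real (card E)) * B\<^sup>2 * N"
    proof -
      have M0: "M \<ge> 0" unfolding M_def by simp
      have "(c * 2 powr (real j - real m / 2))\<^sup>2 = M * K"
        unfolding M_def powr_arith power_mult_distrib c2 by (simp add: mult_ac)
      then have "ennreal ((c * 2 powr (real j - real m / 2))\<^sup>2 * real (card E)) = ennreal M * ennreal K * of_nat (card E)"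
        using M0 K0 by (simp add: ennreal_mult ennreal_of_nat_eq_real_of_nat)
      then show ?thesis by (simp add: mult_ac)
    qed
    finally show "(\<Sum>t\<in>E. \<integral>\<^sup>+ \<xi>. ennreal ((cmod (S_op s G b \<xi> t))\<^sup>2) \<partial>lborel)
         \<le> ennreal ((c * 2 powr (real j - real m / 2))\<^sup>2 * real (card E)) * (sup_norm b)\<^sup>2 * (\<integral>\<^sup>+ x. ennreal ((cmod (F x))\<^sup>2) \<partial>lborel)"
      unfolding B_def N_def .
  qed
qed

end
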